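(* Let $G$ be a well-shaped mesh in $d$ dimensions with maximum degree $b$, and let $G_p=(V_p,E_p)\subseteq G$ be an induced subgraph. The output $G_{px}=(V_{px},E_{px})$, $G_{py}=(V_{py},E_{py})$ of FullyBalancedPartition$(G_p)$ is a fully-balanced $f$-partition of $G_p$ with $f(N)=O(N^{1-1/d})$; that is, $|E(G_{px},G_{py})|\le f(|V_p|)$, $|V_{px}|=|V_{py}|\pm O(1)$, and $|\mathrm{outgoing}(G_{px})|=|\mathrm{outgoing}(G_{py})|\pm O(1)$.
   Context: A well-shaped mesh in $d$ dimensions ($d>1$ constant) is the graph of a decomposition of a domain in $\mathbb{R}^d$ into interior-disjoint simplices meeting only in lower-dimensional simplices, each with aspect ratio bounded by a fixed constant; it has bounded degree $b$. Asymptotic constants may depend on $d$, $b$ and the aspect-ratio bound. For a partition of $G_p$ into $G_{px},G_{py}$, $\mathrm{outgoing}(G_{px})=E(G_{px},G-G_p)$ is the set of edges from vertices of $G_{px}$ to vertices of $G$ outside $G_p$, similarly for $G_{py}$. Geometric separator step: the randomized algorithm of Miller, Teng, Thurston and Vavasis, applied to an induced subgraph $H$ with vertex set $V_H$, repeatedly draws a random sphere separator and accepts once the resulting partition of $V_H$ has both parts of size at most $\beta|V_H|$ with $\beta=(d+1+\epsilon)/(d+2)$ (fixed $0<\epsilon<1$) and at most $c|V_H|^{1-1/d}$ crossing edges. A decomposition tree of $H$ is obtained by applying this separator to $H$ and recursively to each part until parts are single vertices; its leaves are ordered left to right. FullyBalancedPartition$(G_p)$: (1) build such a decomposition tree $T$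 of $G_p$; (2) form a red-blue array by listing the vertices $v$ of $G_p$ in left-to-right leaf order of $T$, writing a blue element for $v$ followed by $|E(v,G-G_p)|$ red elements; (3) find a contiguous subarray containing half the blue elements to within one and half the red elements to within one; let $V_{px}$ be the vertices whose blue elements lie in the subarray and $V_{py}=V_p\setminus V_{px}$; (4) let $G_{px},G_{py}$ be the induced subgraphs. *)

theory Defs
  imports "HOL-Analysis.Analysis"
begin

definition simplex_verts :: "(real^'n) set \<Rightarrow> bool" where
  "simplex_verts P \<longleftrightarrow> card P = CARD('n) + 1 \<and> \<not> affine_dependent P"

text \<open>Aspect ratio of a simplex = diameter / inradius; "aspect ratio at most alpha"
  means some inscribed ball of radius r has diameter \<le> alpha * r.\<close>
definition aspect_bounded :: "real \<Rightarrow> (real^'n) set \<Rightarrow> bool" where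
  "aspect_bounded \<alpha> P \<longleftrightarrow>
     (\<exists>x r. r > 0 \<and> ball x r \<subseteq> convex hull P \<and> diameter (convex hull P) \<le> \<alpha> * r)"

text \<open>A mesh: finitely many simplices, interior-disjoint, any two meeting only in
  a common lower-dimensional face (the hull of their common vertices).\<close>
definition well_shaped_mesh :: "real \<Rightarrow> (real^'n) set set \<Rightarrow> bool" where
  "well_shaped_mesh \<alpha> M \<longleftrightarrow> finite M \<and>
     (\<forall>P\<in>M. simplex_verts P \<and> aspect_bounded \<alpha> P) \<and>
     (\<forall>P\<in>M. \<forall>Q\<in>M. P \<noteq> Q \<longrightarrow>
        interior (convex hull P) \<inter> interior (convex hull Q) = {} \<and>
        convex hull P \<inter> convex hull Q = convex hull (P \<inter> Q))"

definition mesh_vertices :: "(real^'n) set set \<Rightarrow> (real^'n) set" where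
  "mesh_vertices M = \<Union>M"

definition mesh_edge :: "(real^'n) set set \<Rightarrow> real^'n \<Rightarrow> real^'n \<Rightarrow> bool" where
  "mesh_edge M u v \<longleftrightarrow> u \<noteq> v \<and> (\<exists>P\<in>M. u \<in> P \<and> v \<in> P)"

definition crossing :: "('v \<Rightarrow> 'v \<Rightarrow> bool) \<Rightarrow> 'v set \<Rightarrow> 'v set \<Rightarrow> nat" where
  "crossing E A B = card {(u, w). u \<in> A \<and> w \<in> B \<and> E u w}"

definition outdeg :: "('v \<Rightarrow> 'v \<Rightarrow> bool) \<Rightarrow> 'v set \<Rightarrow> 'v \<Rightarrow> nat" where
  "outdeg E Vp v = card {w. E v w \<and> w \<notin> Vp}"

definition outgoing :: "('v \<Rightarrow> 'v \<Rightarrow> bool) \<Rightarrow> 'v set \<Rightarrow> 'v set \<Rightarrow> nat" where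
  "outgoing E Vp A = card {(u, w). u \<in> A \<and> w \<notin> Vp \<and> E u w}"

datatype 'v dtree = Leaf 'v | Node "'v dtree" "'v dtree"

fun leaves :: "'v dtree \<Rightarrow> 'v list" where
  "leaves (Leaf v) = [v]"
| "leaves (Node l r) = leaves l @ leaves r"

text \<open>decomp_tree E beta c e S T: T is a decomposition tree of the induced subgraph on S
  obtained by recursively applying separator splits that pass the acceptance test of the
  separator step: both parts of size at most beta|S| and at most c|S|^e crossing edges
  (with e = 1 - 1/d).  Any possible output of the randomized procedure is such a tree.\<close>
inductive decomp_tree :: "('v \<Rightarrow> 'v \<Rightarrow> bool) \<Rightarrow> real \<Rightarrow> real \<Rightarrow> real \<Rightarrow> 'v set \<Rightarrow> 'v dtree \<Rightarrow> bool"
  for E :: "'v \<Rightarrow> 'v \<Rightarrow> bool" and \<beta> c e :: real where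
  leaf: "decomp_tree E \<beta> c e {v} (Leaf v)"
| node: "\<lbrakk> A \<inter> B = {}; A \<noteq> {}; B \<noteq> {};
           real (card A) \<le> \<beta> * real (card (A \<union> B));
           real (card B) \<le> \<beta> * real (card (A \<union> B));
           real (crossing E A B) \<le> c * real (card (A \<union> B)) powr e;
           decomp_tree E \<beta> c e A l; decomp_tree E \<beta> c e B r \<rbrakk>
         \<Longrightarrow> decomp_tree E \<beta> c e (A \<union> B) (Node l r)"

text \<open>True = blue element, False = red element.\<close>
definition rb_array :: "('v \<Rightarrow> nat) \<Rightarrow> 'v list \<Rightarrow> bool list" where
  "rb_array out vs = concat (map (\<lambda>v. True # replicate (out v) False) vs)"

definition blues :: "bool list \<Rightarrow> nat" where
  "blues xs = length (filter (\<lambda>x. x) xs)"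

definition reds :: "bool list \<Rightarrow> nat" where
  "reds xs = length (filter Not xs)"

definition subarray :: "nat \<Rightarrow> nat \<Rightarrow> 'a list \<Rightarrow> 'a list" where
  "subarray i j xs = take (j - i) (drop i xs)"

definition balanced_subarray :: "('v \<Rightarrow> nat) \<Rightarrow> 'v list \<Rightarrow> nat \<Rightarrow> nat \<Rightarrow> bool" where
  "balanced_subarray out vs i j \<longleftrightarrow>
     (let arr = rb_array out vs; s = subarray i j arr in
       i \<le> j \<and> j \<le> length arr \<and>
       \<bar>real (blues s) - real (blues arr) / 2\<bar> \<le> 1 \<and>
       \<bar>real (reds s) - real (reds arr) / 2\<bar> \<le> 1)"

definition blue_pos :: "('v \<Rightarrow> nat) \<Rightarrow> 'v list \<Rightarrow> nat \<Rightarrow> nat" where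
  "blue_pos out vs k = k + sum_list (map out (take k vs))"

definition selected :: "('v \<Rightarrow> nat) \<Rightarrow> 'v list \<Rightarrow> nat \<Rightarrow> nat \<Rightarrow> 'v set" where
  "selected out vs i j = {vs ! k | k. k < length vs \<and> i \<le> blue_pos out vs k \<and> blue_pos out vs k < j}"

end

theory Submission
  imports Defs
begin

lemma rb_cons: "rb_array out (v#vs) = True # replicate (out v) False @ rb_array out vs"
  by (simp add: rb_array_def)
lemma rb_nil: "rb_array out [] = []" by (simp add: rb_array_def)

lemma blues_app: "blues (xs @ ys) = blues xs + blues ys" by (simp add: blues_def)
lemma reds_app: "reds (xs @ ys) = reds xs + reds ys" by (simp add: reds_def)
lemma blues_rep: "blues (replicate n False) = 0" by (simp add: blues_def)
lemma reds_rep: "reds (replicate n False) = n" by (simp add: reds_def)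
lemma blues_Cons: "blues (x#xs) = (if x then Suc (blues xs) else blues xs)" by (simp add: blues_def)
lemma reds_Cons: "reds (x#xs) = (if x then reds xs else Suc (reds xs))" by (simp add: reds_def)
lemma blues_nil: "blues [] = 0" and reds_nil: "reds [] = 0" by (simp_all add: blues_def reds_def)

lemma take_rb_Suc: "take (Suc p) (rb_array out (v#vs)) =
   True # replicate (min p (out v)) False @ take (p - out v) (rb_array out vs)"
  by (simp add: rb_cons take_append)

lemma bp_0: "blue_pos out vs 0 = 0" by (simp add: blue_pos_def)
lemma bp_Suc: "blue_pos out (v#vs) (Suc k) = Suc (out v + blue_pos out vs k)"
  by (simp add: blue_pos_def)

lemma lemA: "k < length vs \<Longrightarrow> (blue_pos out vs k < p) \<longleftrightarrow> (k < blues (take p (rb_array out vs)))"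
proof (induction vs arbitrary: k p)
  case Nil then show ?case by simp
next
  case (Cons v vs)
  show ?case
  proof (cases p)
    case 0 then show ?thesis by (simp add: blues_nil)
  next
    case (Suc p')
    show ?thesis
    proof (cases k)
      case 0 then show ?thesis using Suc by (simp add: bp_0 take_rb_Suc blues_Cons)
    next
      case (Suc k')
      have "k' < length vs" using Cons.prems Suc by simp
      note IH = Cons.IH[OF this, of "p' - out v"]
      show ?thesis using Suc \<open>p = Suc p'\<close> IH
        by (auto simp add: bp_Suc take_rb_Suc blues_Cons blues_app blues_rep)
    qed
  qed
qed

lemma blues_take_le: "blues (take p (rb_array out vs)) \<le> length vs"
proof (induction vs arbitrary: p)
  case Nil then show ?case by (simp add: rb_nil blues_nil)
next
  case (Cons v vs)
  then show ?case by (cases p) (auto simp: blues_nil take_rb_Suc blues_Cons blues_app blues_rep)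
qed

lemma blues_all: "blues (rb_array out vs) = length vs"
  by (induction vs) (auto simp: rb_nil rb_cons blues_nil blues_Cons blues_app blues_rep)
lemma reds_all: "reds (rb_array out vs) = sum_list (map out vs)"
  by (induction vs) (auto simp: rb_nil rb_cons reds_nil reds_Cons reds_app reds_rep)

lemma lemB: "(\<forall>v\<in>set vs. out v \<le> b) \<Longrightarrow>
   reds (take p (rb_array out vs)) \<le> sum_list (map out (take (blues (take p (rb_array out vs))) vs)) \<and>
   sum_list (map out (take (blues (take p (rb_array out vs))) vs)) \<le> reds (take p (rb_array out vs)) + b"
proof (induction vs arbitrary: p)
  case Nil then show ?case by (simp add: rb_nil blues_nil reds_nil)
next
  case (Cons v vs)
  show ?case
  proof (cases p)
    case 0 then show ?thesis by (simp add: blues_nil reds_nil)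
  next
    case (Suc p')
    show ?thesis
    proof (cases "p' < out v")
      case True
      then show ?thesis using Suc Cons.prems
        by (simp add: take_rb_Suc blues_Cons blues_app blues_rep reds_Cons reds_app reds_rep blues_nil reds_nil)
    next
      case False
      have "\<forall>v\<in>set vs. out v \<le> b" using Cons.prems by simp
      note IH = Cons.IH[OF this, of "p' - out v"]
      show ?thesis using Suc False IH
        by (simp add: take_rb_Suc blues_Cons blues_app blues_rep reds_Cons reds_app reds_rep)
    qed
  qed
qed


lemma dt_leaves: "decomp_tree E \<beta> c e S T \<Longrightarrow> distinct (leaves T) \<and> set (leaves T) = S"
  by (induction rule: decomp_tree.induct) auto

lemma crossing_fin: "finite X \<Longrightarrow> finite Y \<Longrightarrow> finite {(u, w). u \<in> X \<and> w \<in> Y \<and> E u w}"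
  by (rule finite_subset[of _ "X \<times> Y"]) auto

lemma crossing_mono: "X \<subseteq> X' \<Longrightarrow> Y \<subseteq> Y' \<Longrightarrow> finite X' \<Longrightarrow> finite Y' \<Longrightarrow>
   crossing E X Y \<le> crossing E X' Y'"
  unfolding crossing_def by (rule card_mono[OF crossing_fin]) auto

lemma crossing_Un2: "crossing E X (Y \<union> Z) \<le> crossing E X Y + crossing E X Z"
proof -
  have "{(u, w). u \<in> X \<and> w \<in> Y \<union> Z \<and> E u w} = {(u, w). u \<in> X \<and> w \<in> Y \<and> E u w} \<union> {(u, w). u \<in> X \<and> w \<in> Z \<and> E u w}"
    by auto
  then show ?thesis unfolding crossing_def by (simp only:) (rule card_Un_le)
qed

lemma crossing_Un1: "crossing E (X \<union> Y) Z \<le> crossing E X Z + crossing E Y Z"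
proof -
  have "{(u, w). u \<in> X \<union> Y \<and> w \<in> Z \<and> E u w} = {(u, w). u \<in> X \<and> w \<in> Z \<and> E u w} \<union> {(u, w). u \<in> Y \<and> w \<in> Z \<and> E u w}"
    by auto
  then show ?thesis unfolding crossing_def by (simp only:) (rule card_Un_le)
qed

lemma crossing_empty1: "crossing E {} Y = 0" and crossing_empty2: "crossing E X {} = 0"
  by (simp_all add: crossing_def)

lemma powr_lt1: "0 < (\<beta>::real) \<Longrightarrow> \<beta> < 1 \<Longrightarrow> 0 < e \<Longrightarrow> \<beta> powr e < 1"
  using powr_less_mono2[of e \<beta> 1] by simp

lemma prefix_bound:
  assumes "decomp_tree E \<beta> c e S T" "0 < \<beta>" "\<beta> < 1" "0 < e" "0 \<le> c"
  shows "real (crossing E (set (take a (leaves T))) (S - set (take a (leaves T))))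
          \<le> c / (1 - \<beta> powr e) * real (card S) powr e"
  using assms
proof (induction arbitrary: a rule: decomp_tree.induct)
  case (leaf v)
  have "\<beta> powr e < 1" using leaf by (simp add: powr_lt1)
  then have K: "0 \<le> c / (1 - \<beta> powr e)" using leaf by simp
  have "crossing E (set (take a [v])) ({v} - set (take a [v])) = 0"
    by (cases a) (auto simp: crossing_empty1 crossing_empty2)
  then show ?case using K by simp
next
  case (node A B l r)
  define K where "K = c / (1 - \<beta> powr e)"
  have bl: "\<beta> powr e < 1" using node by (simp add: powr_lt1)
  have Kc: "K * \<beta> powr e + c = K" unfolding K_def using bl by (simp add: field_simps)
  have K0: "0 \<le> K" unfolding K_def using bl node by simp
  have LA: "distinct (leaves l) \<and> set (leaves l) = A" using dt_leaves[OF node.hyps(7)] .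
  have LB: "distinct (leaves r) \<and> set (leaves r) = B" using dt_leaves[OF node.hyps(8)] .
  have fA: "finite A" using LA by (metis List.finite_set)
  have fB: "finite B" using LB by (metis List.finite_set)
  define n where "n = real (card (A \<union> B))"
  have n0: "0 \<le> n" unfolding n_def by simp
  have cross: "real (crossing E A B) \<le> c * n powr e" using node.hyps(6) n_def by simp
  have pw: "K * real (card X) powr e \<le> K * \<beta> powr e * n powr e" if hX: "real (card X) \<le> \<beta> * n" for X :: "_ set"
  proof -
    have "real (card X) powr e \<le> (\<beta> * n) powr e"
      using node.prems hX by (intro powr_mono2) auto
    also have "\<dots> = \<beta> powr e * n powr e" using n0 node.prems by (simp add: powr_mult)
    finally show ?thesis
      using K0 by (simp add: mult_left_mono mult.assoc)
  qed
  have bound: "real x \<le> K * \<beta> powr e * n powr e + c * n powr e \<Longrightarrow> real x \<le> K * n powr e" for x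
    using Kc by (metis distrib_right)
  show ?case
  proof (cases "a \<le> length (leaves l)")
    case True
    define P where "P = set (take a (leaves l))"
    have tk: "take a (leaves (Node l r)) = take a (leaves l)" using True by simp
    have PA: "P \<subseteq> A" using LA unfolding P_def by (meson set_take_subset subset_iff)
    have eq: "(A \<union> B) - P = (A - P) \<union> B" using PA node.hyps(1) by blast
    have "crossing E P ((A - P) \<union> B) \<le> crossing E P (A - P) + crossing E P B"
      by (rule crossing_Un2)
    moreover have "crossing E P B \<le> crossing E A B"
      using PA fA fB by (intro crossing_mono) auto
    ultimately have c1: "real (crossing E P ((A \<union> B) - P)) \<le> real (crossing E P (A - P)) + real (crossing E A B)"
      using eq by simp
    have IH: "real (crossing E P (A - P)) \<le> K * real (card A) powr e"
      using node.IH(1)[of a] node.prems unfolding K_def P_def by simp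
    have "real (crossing E P ((A \<union> B) - P)) \<le> K * n powr e"
      apply (rule bound) using c1 IH pw[of A] node.hyps(4) cross unfolding n_def by linarith
    then show ?thesis unfolding tk P_def[symmetric] K_def[symmetric] n_def[symmetric] .
  next
    case False
    define P where "P = set (take (a - length (leaves l)) (leaves r))"
    have tk: "set (take a (leaves (Node l r))) = A \<union> P" using False LA unfolding P_def by simp
    have PB: "P \<subseteq> B" using LB unfolding P_def by (meson set_take_subset subset_iff)
    have eq: "(A \<union> B) - (A \<union> P) = B - P" using PB node.hyps(1) by blast
    have "crossing E (A \<union> P) (B - P) \<le> crossing E A (B - P) + crossing E P (B - P)"
      by (rule crossing_Un1)
    moreover have "crossing E A (B - P) \<le> crossing E A B"
      using fA fB by (intro crossing_mono) auto
    ultimately have c1: "real (crossing E (A \<union> P) (B - P)) \<le> real (crossing E P (B - P)) + real (crossing E A B)"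
      by simp
    have IH: "real (crossing E P (B - P)) \<le> K * real (card B) powr e"
      using node.IH(2)[of "a - length (leaves l)"] node.prems unfolding K_def P_def by simp
    have "real (crossing E (A \<union> P) (B - P)) \<le> K * n powr e"
      apply (rule bound) using c1 IH pw[of B] node.hyps(5) cross unfolding n_def by linarith
    then show ?thesis unfolding tk eq K_def[symmetric] n_def[symmetric] .
  qed
qed


lemma set_take_nth: "m \<le> length vs \<Longrightarrow> set (take m vs) = (\<lambda>k. vs ! k) ` {..<m}"
proof -
  assume m: "m \<le> length vs"
  have "set (take m vs) = {take m vs ! k | k. k < length (take m vs)}" by (rule set_conv_nth)
  also have "\<dots> = {vs ! k | k. k < m}" using m by (auto simp: min_def) (metis nth_take)
  also have "\<dots> = (\<lambda>k. vs ! k) ` {..<m}" by auto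
  finally show ?thesis .
qed


lemma out_sum: "finite A \<Longrightarrow> (\<forall>v. finite {w. E v w}) \<Longrightarrow> outgoing E Vp A = sum (outdeg E Vp) A"
proof -
  assume fA: "finite A" and fN: "\<forall>v. finite {w. E v w}"
  have "{(u, w). u \<in> A \<and> w \<notin> Vp \<and> E u w} = Sigma A (\<lambda>u. {w. E u w \<and> w \<notin> Vp})" by auto
  moreover have "card (Sigma A (\<lambda>u. {w. E u w \<and> w \<notin> Vp})) = sum (\<lambda>u. card {w. E u w \<and> w \<notin> Vp}) A"
    using fA fN by (intro card_SigmaI) auto
  ultimately show ?thesis unfolding outgoing_def outdeg_def by simp
qed

lemma main:
  assumes symE: "\<forall>u w. E u w \<longrightarrow> E w u"
  and fN: "\<forall>v. finite {w. E v w}" and degb: "\<forall>v. card {w. E v w} \<le> b"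
  and dt: "decomp_tree E \<beta> c e Vp T" and bal: "balanced_subarray (outdeg E Vp) (leaves T) i j"
  and b0: "0 < \<beta>" and b1: "\<beta> < 1" and e0: "0 < e" and c0: "0 \<le> c"
  shows "real (crossing E (selected (outdeg E Vp) (leaves T) i j) (Vp - selected (outdeg E Vp) (leaves T) i j))
           \<le> 2 * (c / (1 - \<beta> powr e)) * real (card Vp) powr e \<and>
         \<bar>real (card (selected (outdeg E Vp) (leaves T) i j)) - real (card (Vp - selected (outdeg E Vp) (leaves T) i j))\<bar> \<le> 2 \<and>
         \<bar>real (outgoing E Vp (selected (outdeg E Vp) (leaves T) i j)) - real (outgoing E Vp (Vp - selected (outdeg E Vp) (leaves T) i j))\<bar> \<le> 2 + 2 * real b"
proof -
  define vs where "vs = leaves T"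
  define out where "out = outdeg E Vp"
  define arr where "arr = rb_array out vs"
  define n where "n = length vs"
  define s where "s = subarray i j arr"
  define mi where "mi = blues (take i arr)"
  define mj where "mj = blues (take j arr)"
  define Ri where "Ri = reds (take i arr)"
  define Rj where "Rj = reds (take j arr)"
  define S where "S m = sum_list (map out (take m vs))" for m
  define P where "P m = set (take m vs)" for m
  define Vpx where "Vpx = selected out vs i j"
  have dv: "distinct vs" and sv: "set vs = Vp" using dt_leaves[OF dt] unfolding vs_def by auto
  have fVp: "finite Vp" using sv by auto
  have cVp: "card Vp = n" using sv dv distinct_card n_def by metis
  have ij: "i \<le> j" and jl: "j \<le> length arr"
    and hb: "\<bar>real (blues s) - real (blues arr) / 2\<bar> \<le> 1"
    and hr: "\<bar>real (reds s) - real (reds arr) / 2\<bar> \<le> 1"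
    using bal unfolding balanced_subarray_def Let_def s_def arr_def out_def vs_def by auto
  have tj: "take j arr = take i arr @ s"
    unfolding s_def subarray_def using ij by (metis le_add_diff_inverse take_add)
  have bs: "blues s + mi = mj" unfolding mi_def mj_def tj blues_app by simp
  have rs: "reds s + Ri = Rj" unfolding Ri_def Rj_def tj reds_app by simp
  have ba: "blues arr = n" unfolding arr_def n_def by (rule blues_all)
  have ra: "reds arr = S n" unfolding arr_def S_def n_def by (simp add: reds_all)
  have mjn: "mj \<le> n" unfolding mj_def arr_def n_def by (rule blues_take_le)
  have mimj: "mi \<le> mj" using bs by simp
  have selA: "\<And>k. k < n \<Longrightarrow> (blue_pos out vs k < p) \<longleftrightarrow> (k < blues (take p arr))" for p
    unfolding arr_def n_def by (rule lemA)
  have Vpx_eq: "Vpx = (\<lambda>k. vs ! k) ` {mi..<mj}"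
  proof -
    have "Vpx = {vs ! k | k. k < n \<and> i \<le> blue_pos out vs k \<and> blue_pos out vs k < j}"
      unfolding Vpx_def selected_def n_def by simp
    also have "\<dots> = {vs ! k | k. k < n \<and> mi \<le> k \<and> k < mj}"
    proof -
      have hk: "(k < n \<and> i \<le> blue_pos out vs k \<and> blue_pos out vs k < j) \<longleftrightarrow> (k < n \<and> mi \<le> k \<and> k < mj)" for k
      proof (cases "k < n")
        case True
        have 1: "blue_pos out vs k < i \<longleftrightarrow> k < mi" using selA[OF True, of i] unfolding mi_def .
        have 2: "blue_pos out vs k < j \<longleftrightarrow> k < mj" using selA[OF True, of j] unfolding mj_def .
        show ?thesis using 1 2 True by (metis not_le)
      qed simp
      show ?thesis by (simp only: hk)
    qed
    also have "\<dots> = (\<lambda>k. vs ! k) ` {mi..<mj}" using mjn by auto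
    finally show ?thesis .
  qed
  have inj: "inj_on (\<lambda>k. vs ! k) {..<n}" using dv unfolding n_def
    by (simp add: inj_on_nth)
  have Pm: "m \<le> n \<Longrightarrow> P m = (\<lambda>k. vs ! k) ` {..<m}" for m
    unfolding P_def n_def by (rule set_take_nth)
  have Vpx_P: "Vpx = P mj - P mi"
  proof -
    have "{mi..<mj} = {..<mj} - {..<mi}" by auto
    moreover have "(\<lambda>k. vs ! k) ` ({..<mj} - {..<mi}) = (\<lambda>k. vs ! k) ` {..<mj} - (\<lambda>k. vs ! k) ` {..<mi}"
      by (rule inj_on_image_set_diff[OF inj]) (use mjn mimj in auto)
    ultimately have "(\<lambda>k. vs ! k) ` {mi..<mj} = (\<lambda>k. vs ! k) ` {..<mj} - (\<lambda>k. vs ! k) ` {..<mi}"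
      by simp
    then show ?thesis using Vpx_eq Pm mjn mimj by simp
  qed
  have PmiPmj: "P mi \<subseteq> P mj" unfolding P_def using mimj by (metis set_take_subset_set_take)
  have PVp: "P m \<subseteq> Vp" for m unfolding P_def using sv by (metis set_take_subset)
  have cardVpx: "card Vpx = mj - mi"
    using Vpx_eq inj mjn by (simp add: card_image inj_on_subset[of _ "{..<n}"] subset_iff)
  have VpxVp: "Vpx \<subseteq> Vp" using Vpx_P PVp by blast
  have cardVpy: "card (Vp - Vpx) = n - (mj - mi)"
    using VpxVp fVp cVp cardVpx by (simp add: card_Diff_subset finite_subset)
  have part2: "\<bar>real (card Vpx) - real (card (Vp - Vpx))\<bar> \<le> 2"
  proof -
    have x1: "real mj = real (blues s) + real mi" using bs by (metis of_nat_add)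
    have x2: "real (card Vpx) = real mj - real mi" using cardVpx mimj by (simp add: of_nat_diff)
    have x3: "real (card (Vp - Vpx)) = real n - (real mj - real mi)" using cardVpy mimj mjn by (simp add: of_nat_diff)
    have x4: "real (blues s) - real n / 2 \<le> 1" "- (real (blues s) - real n / 2) \<le> 1"
      using hb unfolding ba abs_le_iff by auto
    show ?thesis unfolding abs_le_iff x2 x3 using x1 x4 by linarith
  qed
  have outb: "\<forall>v\<in>set vs. out v \<le> b"
  proof
    fix v
    have "out v \<le> card {w. E v w}" unfolding out_def outdeg_def
      using fN by (intro card_mono) auto
    then show "out v \<le> b" using degb le_trans by blast
  qed
  have Bi: "Ri \<le> S mi \<and> S mi \<le> Ri + b"
    using lemB[OF outb, of i] unfolding Ri_def S_def mi_def arr_def by simp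
  have Bj: "Rj \<le> S mj \<and> S mj \<le> Rj + b"
    using lemB[OF outb, of j] unfolding Rj_def S_def mj_def arr_def by simp
  have SP: "real (S m) = (\<Sum>v\<in>P m. real (out v))" for m
    unfolding S_def P_def using dv
    by (simp add: sum_list_distinct_conv_sum_set flip: of_nat_sum)
  have fP: "finite (P m)" for m unfolding P_def by simp
  have oVpx: "real (outgoing E Vp Vpx) = real (S mj) - real (S mi)"
  proof -
    have "real (outgoing E Vp Vpx) = (\<Sum>v\<in>Vpx. real (out v))"
      using out_sum[OF finite_subset[OF VpxVp fVp] fN] unfolding out_def by simp
    also have "\<dots> = real (S mj) - real (S mi)" unfolding Vpx_P SP
      using PmiPmj fP by (simp add: sum_diff)
    finally show ?thesis .
  qed
  have SnVp: "real (S n) = (\<Sum>v\<in>Vp. real (out v))"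
    using SP[of n] unfolding P_def n_def using sv by simp
  have oVpy: "real (outgoing E Vp (Vp - Vpx)) = real (S n) - (real (S mj) - real (S mi))"
  proof -
    have "real (outgoing E Vp (Vp - Vpx)) = (\<Sum>v\<in>Vp - Vpx. real (out v))"
      using out_sum[OF finite_Diff[OF fVp] fN] unfolding out_def by simp
    also have "\<dots> = (\<Sum>v\<in>Vp. real (out v)) - (\<Sum>v\<in>Vpx. real (out v))"
      using VpxVp fVp by (simp add: sum_diff)
    also have "(\<Sum>v\<in>Vpx. real (out v)) = real (outgoing E Vp Vpx)"
      using out_sum[OF finite_subset[OF VpxVp fVp] fN] unfolding out_def by simp
    finally show ?thesis using oVpx SnVp by simp
  qed
  have part3: "\<bar>real (outgoing E Vp Vpx) - real (outgoing E Vp (Vp - Vpx))\<bar> \<le> 2 + 2 * real b"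
  proof -
    have r1: "real Rj = real (reds s) + real Ri" using rs by (metis of_nat_add)
    have "real Ri \<le> real (S mi)" "real (S mi) \<le> real Ri + real b"
         "real Rj \<le> real (S mj)" "real (S mj) \<le> real Rj + real b" using Bi Bj by simp_all
    moreover have x4: "real (reds s) - real (S n) / 2 \<le> 1" "- (real (reds s) - real (S n) / 2) \<le> 1"
      using hr unfolding ra abs_le_iff by auto
    ultimately show ?thesis unfolding abs_le_iff oVpx oVpy using r1 by linarith
  qed
  define K where "K = c / (1 - \<beta> powr e)"
  have pb: "real (crossing E (P m) (Vp - P m)) \<le> K * real (card Vp) powr e" for m
    using prefix_bound[OF dt b0 b1 e0 c0, of m] unfolding K_def P_def vs_def .
  have part1: "real (crossing E Vpx (Vp - Vpx)) \<le> 2 * K * real (card Vp) powr e"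
  proof -
    define X1 where "X1 = {(u, w). u \<in> P mj \<and> w \<in> Vp - P mj \<and> E u w}"
    define X2 where "X2 = {(u, w). u \<in> P mi \<and> w \<in> Vp - P mi \<and> E u w}"
    have sub: "{(u, w). u \<in> Vpx \<and> w \<in> Vp - Vpx \<and> E u w} \<subseteq> X1 \<union> prod.swap ` X2"
    proof
      fix x assume "x \<in> {(u, w). u \<in> Vpx \<and> w \<in> Vp - Vpx \<and> E u w}"
      then obtain u w where x: "x = (u, w)" "u \<in> Vpx" "w \<in> Vp - Vpx" "E u w" by blast
      show "x \<in> X1 \<union> prod.swap ` X2"
      proof (cases "w \<in> P mj")
        case True
        then have "w \<in> P mi" using x Vpx_P by blast
        moreover have "u \<in> Vp - P mi" using x Vpx_P VpxVp by blast
        ultimately have "(w, u) \<in> X2" using symE x unfolding X2_def by blast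
        then show ?thesis using x by (simp add: image_iff) (metis swap_simp)
      next
        case False
        then show ?thesis using x Vpx_P unfolding X1_def by blast
      qed
    qed
    have f1: "finite X1" unfolding X1_def by (rule crossing_fin) (use fP fVp in auto)
    have f2: "finite X2" unfolding X2_def by (rule crossing_fin) (use fP fVp in auto)
    have "crossing E Vpx (Vp - Vpx) \<le> card (X1 \<union> prod.swap ` X2)"
      unfolding crossing_def using f1 f2 sub by (intro card_mono) auto
    also have "\<dots> \<le> card X1 + card (prod.swap ` X2)" by (rule card_Un_le)
    also have "\<dots> \<le> card X1 + card X2" using card_image_le[OF f2] by simp
    finally have "real (crossing E Vpx (Vp - Vpx)) \<le> real (card X1) + real (card X2)" by linarith
    moreover have "real (card X1) \<le> K * real (card Vp) powr e" using pb[of mj] unfolding X1_def crossing_def .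
    moreover have "real (card X2) \<le> K * real (card Vp) powr e" using pb[of mi] unfolding X2_def crossing_def .
    ultimately show ?thesis by linarith
  qed
  show ?thesis using part1 part2 part3 unfolding Vpx_def out_def vs_def K_def by simp
qed


theorem lemma4:
  fixes \<alpha> \<epsilon> c :: real and b :: nat
  assumes "CARD('n) \<ge> 2" and "0 < \<epsilon>" and "\<epsilon> < 1" and "c > 0"
  shows "\<exists>C::real. \<forall>(M :: (real^'n) set set) Vp T i j.
     well_shaped_mesh \<alpha> M \<and> (\<forall>v. card {w. mesh_edge M v w} \<le> b) \<and>
     Vp \<subseteq> mesh_vertices M \<and>
     decomp_tree (mesh_edge M) ((real CARD('n) + 1 + \<epsilon>) / (real CARD('n) + 2)) c
                 (1 - 1 / real CARD('n)) Vp T \<and>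
     balanced_subarray (outdeg (mesh_edge M) Vp) (leaves T) i j
   \<longrightarrow>
     (let Vpx = selected (outdeg (mesh_edge M) Vp) (leaves T) i j; Vpy = Vp - Vpx in
       real (crossing (mesh_edge M) Vpx Vpy) \<le> C * real (card Vp) powr (1 - 1 / real CARD('n)) \<and>
       \<bar>real (card Vpx) - real (card Vpy)\<bar> \<le> C \<and>
       \<bar>real (outgoing (mesh_edge M) Vp Vpx) - real (outgoing (mesh_edge M) Vp Vpy)\<bar> \<le> C)"
proof -
  define \<beta> where "\<beta> = (real CARD('n) + 1 + \<epsilon>) / (real CARD('n) + 2)"
  define e where "e = 1 - 1 / real CARD('n)"
  have d2: "real CARD('n) \<ge> 2" using assms(1) by simp
  have b0: "0 < \<beta>" unfolding \<beta>_def using d2 assms(2) by simp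
  have b1: "\<beta> < 1" unfolding \<beta>_def using d2 assms(3) by (simp add: divide_less_eq)
  have e0: "0 < e" unfolding e_def using d2 by (simp add: divide_less_eq)
  define K where "K = c / (1 - \<beta> powr e)"
  define C where "C = max (2 * K) (2 + 2 * real b)"
  show ?thesis unfolding \<beta>_def[symmetric] e_def[symmetric]
  proof (rule exI[of _ C], intro allI impI)
    fix M :: "(real^'n) set set" and Vp T i j
    assume H: "well_shaped_mesh \<alpha> M \<and> (\<forall>v. card {w. mesh_edge M v w} \<le> b) \<and>
     Vp \<subseteq> mesh_vertices M \<and> decomp_tree (mesh_edge M) \<beta> c e Vp T \<and>
     balanced_subarray (outdeg (mesh_edge M) Vp) (leaves T) i j"
    have symE: "\<forall>u w. mesh_edge M u w \<longrightarrow> mesh_edge M w u" unfolding mesh_edge_def by blast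
    have fM: "finite (\<Union>M)"
    proof -
      have "finite M" using H unfolding well_shaped_mesh_def by simp
      moreover have "\<forall>P\<in>M. finite P"
      proof
        fix P assume "P \<in> M"
        then have "card P = CARD('n) + 1" using H unfolding well_shaped_mesh_def simplex_verts_def by simp
        then show "finite P" by (metis card.infinite add_is_0 one_neq_zero)
      qed
      ultimately show ?thesis by simp
    qed
    have fN: "\<forall>v. finite {w. mesh_edge M v w}"
      using fM by (metis (no_types, lifting) finite_subset mem_Collect_eq mesh_edge_def subsetI UnionI)
    have m: "real (crossing (mesh_edge M) (selected (outdeg (mesh_edge M) Vp) (leaves T) i j) (Vp - selected (outdeg (mesh_edge M) Vp) (leaves T) i j))
           \<le> 2 * K * real (card Vp) powr e \<and>
         \<bar>real (card (selected (outdeg (mesh_edge M) Vp) (leaves T) i j)) - real (card (Vp - selected (outdeg (mesh_edge M) Vp) (leaves T) i j))\<bar> \<le> 2 \<and>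
         \<bar>real (outgoing (mesh_edge M) Vp (selected (outdeg (mesh_edge M) Vp) (leaves T) i j)) - real (outgoing (mesh_edge M) Vp (Vp - selected (outdeg (mesh_edge M) Vp) (leaves T) i j))\<bar> \<le> 2 + 2 * real b"
      unfolding K_def using main[OF symE fN _ _ _ b0 b1 e0, of b c Vp T i j] H assms(4) by simp
    have "2 * K * real (card Vp) powr e \<le> C * real (card Vp) powr e"
      unfolding C_def by (intro mult_right_mono) auto
    moreover have "2 \<le> C" "2 + 2 * real b \<le> C" unfolding C_def by auto
    ultimately show "let Vpx = selected (outdeg (mesh_edge M) Vp) (leaves T) i j; Vpy = Vp - Vpx in
       real (crossing (mesh_edge M) Vpx Vpy) \<le> C * real (card Vp) powr e \<and>
       \<bar>real (card Vpx) - real (card Vpy)\<bar> \<le> C \<and>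
       \<bar>real (outgoing (mesh_edge M) Vp Vpx) - real (outgoing (mesh_edge M) Vp Vpy)\<bar> \<le> C"
      using m unfolding Let_def by linarith
  qed
qed

end
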